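(* For any $\mathbf{V}\in\mathbb{R}^{N\times N}$ with $\mathbf{V}\boldsymbol\mu=\boldsymbol\mu$, any $k\in[N]$ and any $t\in[T]$, $$\mathbb{E}[V_{x_o,x_t}\mid x_{T+1}=k]=q^{(k)}_t\langle\mathbf{V},\mathbf{P}\rangle_\mu+(1-q^{(k)}_t)\|\boldsymbol\mu\|^2.$$
   Context: Let $\mathbf{P}\in\mathbb{R}^{N\times N}$ have nonnegative entries with columns summing to $1$, and let $\boldsymbol\mu\in\mathbb{R}^N$ be a probability vector with $\mathbf{P}\boldsymbol\mu=\boldsymbol\mu$. Let $\mathbf{q}^{(1)},\dots,\mathbf{q}^{(N)}$ be probability vectors in $\mathbb{R}^T$. Random variables: $x_1,\dots,x_{T+1}$ i.i.d. with law $\boldsymbol\mu$ on $[N]$, and $x_o\in[N]$ with $\Pr(x_o=n\mid x_{T+1}=k,x_1,\dots,x_T)=\sum_{s=1}^Tq^{(k)}_sP_{n,x_s}$. For matrices $\mathbf{M},\mathbf{M}'$ with $N$ columns, $\langle\mathbf{M},\mathbf{M}'\rangle_\mu=\operatorname{Tr}(\mathbf{M}\operatorname{diag}(\boldsymbol\mu)\mathbf{M}'^\top)$; $\|\boldsymbol\mu\|$ is the Euclidean norm. *)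

theory Defs
  imports "HOL-Analysis.Analysis" "HOL-Library.FuncSet"
begin

text \<open>Conventions: states [N] are 0..<N, times [T] are 1..T.
  Matrices are functions nat => nat => real, entry (i,j) is M i j.
  q k s is q^{(k)}_s.  A trajectory xs assigns xs s to each s in 1..T.\<close>

definition mu_inner :: "nat \<Rightarrow> (nat \<Rightarrow> real) \<Rightarrow> (nat \<Rightarrow> nat \<Rightarrow> real) \<Rightarrow> (nat \<Rightarrow> nat \<Rightarrow> real) \<Rightarrow> real" where
  "mu_inner N mu M M' = (\<Sum>i<N. \<Sum>j<N. M i j * mu j * M' i j)"
  \<comment> \<open>Tr(M diag(mu) M'^T)\<close>

definition vnorm :: "nat \<Rightarrow> (nat \<Rightarrow> real) \<Rightarrow> real" where
  "vnorm N v = sqrt (\<Sum>i<N. (v i)^2)"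

text \<open>Conditional law of x_o given x_{T+1} = k and x_1..x_T = xs.\<close>
definition xo_law :: "nat \<Rightarrow> (nat \<Rightarrow> nat \<Rightarrow> real) \<Rightarrow> (nat \<Rightarrow> nat \<Rightarrow> real) \<Rightarrow> nat \<Rightarrow> (nat \<Rightarrow> nat) \<Rightarrow> nat \<Rightarrow> real" where
  "xo_law T P q k xs n = (\<Sum>s\<in>{1..T}. q k s * P n (xs s))"

text \<open>E[ f(x_o, x_1..x_T) | x_{T+1} = k ]: x_1..x_T i.i.d. mu, independent of x_{T+1}.\<close>
definition cond_exp :: "nat \<Rightarrow> nat \<Rightarrow> (nat \<Rightarrow> real) \<Rightarrow> (nat \<Rightarrow> nat \<Rightarrow> real) \<Rightarrow> (nat \<Rightarrow> nat \<Rightarrow> real) \<Rightarrow> nat \<Rightarrow> (nat \<Rightarrow> (nat \<Rightarrow> nat) \<Rightarrow> real) \<Rightarrow> real" where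
  "cond_exp N T mu P q k f =
     (\<Sum>xs\<in>PiE {1..T} (\<lambda>_. {..<N}). (\<Prod>s\<in>{1..T}. mu (xs s)) *
        (\<Sum>n<N. xo_law T P q k xs n * f n xs))"

end

theory Submission
  imports Defs
begin

lemma exp2:
  fixes I :: "nat set" and mu g h :: "nat \<Rightarrow> real"
  assumes fin: "finite I" and a: "a \<in> I" and b: "b \<in> I" and ms: "(\<Sum>i<N. mu i) = 1"
  shows "(\<Sum>xs\<in>PiE I (\<lambda>_. {..<N}). (\<Prod>s\<in>I. mu (xs s)) * (g (xs a) * h (xs b)))
    = (if a = b then (\<Sum>j<N. mu j * g j * h j) else (\<Sum>j<N. mu j * g j) * (\<Sum>j<N. mu j * h j))"
proof -
  define F where "F s y = mu y * (if s = a then g y else 1) * (if s = b then h y else 1)" for s y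
  have 1: "(\<Prod>s\<in>I. F s (xs s)) = (\<Prod>s\<in>I. mu (xs s)) * (g (xs a) * h (xs b))" for xs
    unfolding F_def prod.distrib using a b
    by (simp add: prod.If_cases fin)
  have "(\<Sum>xs\<in>PiE I (\<lambda>_. {..<N}). (\<Prod>s\<in>I. mu (xs s)) * (g (xs a) * h (xs b)))
       = (\<Sum>xs\<in>PiE I (\<lambda>_. {..<N}). \<Prod>s\<in>I. F s (xs s))" using 1 by simp
  also have "\<dots> = (\<Prod>s\<in>I. \<Sum>y<N. F s y)" by (rule prod_sum_PiE[symmetric]) (auto simp: fin)
  also have "\<dots> = (if a = b then (\<Sum>j<N. mu j * g j * h j) else (\<Sum>j<N. mu j * g j) * (\<Sum>j<N. mu j * h j))"
  proof (cases "a = b")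
    case True
    have r: "(\<Prod>s\<in>I - {a}. \<Sum>y<N. F s y) = 1"
      by (rule prod.neutral) (use True in \<open>auto simp: F_def ms\<close>)
    show ?thesis using prod.remove[OF fin a, of "\<lambda>s. \<Sum>y<N. F s y"] True r
      by (simp add: F_def mult.assoc)
  next
    case False
    have bb: "b \<in> I - {a}" using b False by auto
    have r: "(\<Prod>s\<in>I - {a} - {b}. \<Sum>y<N. F s y) = 1"
      by (rule prod.neutral) (auto simp: F_def ms)
    show ?thesis using prod.remove[OF fin a, of "\<lambda>s. \<Sum>y<N. F s y"]
        prod.remove[OF _ bb, of "\<lambda>s. \<Sum>y<N. F s y"] False r fin
      by (simp add: F_def)
  qed
  finally show ?thesis .
qed

theorem lemmaB6:
  fixes N T :: nat and P V :: "nat \<Rightarrow> nat \<Rightarrow> real" and mu :: "nat \<Rightarrow> real"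
    and q :: "nat \<Rightarrow> nat \<Rightarrow> real" and k t :: nat
  assumes P_nonneg: "\<forall>i<N. \<forall>j<N. P i j \<ge> 0"
    and P_col: "\<forall>j<N. (\<Sum>i<N. P i j) = 1"
    and mu_nonneg: "\<forall>i<N. mu i \<ge> 0"
    and mu_sum: "(\<Sum>i<N. mu i) = 1"
    and P_mu: "\<forall>i<N. (\<Sum>j<N. P i j * mu j) = mu i"
    and q_nonneg: "\<forall>k'<N. \<forall>s\<in>{1..T}. q k' s \<ge> 0"
    and q_sum: "\<forall>k'<N. (\<Sum>s\<in>{1..T}. q k' s) = 1"
    and V_mu: "\<forall>i<N. (\<Sum>j<N. V i j * mu j) = mu i"
    and k: "k < N"
    and t: "t \<in> {1..T}"
  shows "cond_exp N T mu P q k (\<lambda>n xs. V n (xs t))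
           = q k t * mu_inner N mu V P + (1 - q k t) * (vnorm N mu)^2"
proof -
  define E where "E n s = (\<Sum>xs\<in>PiE {1..T} (\<lambda>_. {..<N}). (\<Prod>s\<in>{1..T}. mu (xs s)) * (P n (xs s) * V n (xs t)))" for n s
  define X where "X = (\<Sum>n<N. \<Sum>j<N. mu j * P n j * V n j)"
  define Y where "Y = (\<Sum>n<N. mu n * mu n)"
  have "cond_exp N T mu P q k (\<lambda>n xs. V n (xs t))
      = (\<Sum>xs\<in>PiE {1..T} (\<lambda>_. {..<N}). \<Sum>n<N. \<Sum>s\<in>{1..T}. q k s * ((\<Prod>s\<in>{1..T}. mu (xs s)) * (P n (xs s) * V n (xs t))))"
    unfolding cond_exp_def xo_law_def
    by (simp add: sum_distrib_left sum_distrib_right mult_ac)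
  also have "\<dots> = (\<Sum>n<N. \<Sum>s\<in>{1..T}. q k s * E n s)"
    unfolding E_def sum_distrib_left
    by (subst sum.swap, rule sum.cong, simp, subst sum.swap, simp)
  also have "\<dots> = (\<Sum>s\<in>{1..T}. q k s * (if s = t then X else Y))"
  proof -
    have "E n s = (if s = t then (\<Sum>j<N. mu j * P n j * V n j) else (\<Sum>j<N. mu j * P n j) * (\<Sum>j<N. mu j * V n j))"
      if "s \<in> {1..T}" for n s
      unfolding E_def by (rule exp2) (use that t mu_sum in auto)
    moreover have "(\<Sum>j<N. mu j * P n j) * (\<Sum>j<N. mu j * V n j) = mu n * mu n" if "n < N" for n
      using P_mu V_mu that by (simp add: mult.commute)
    ultimately have "(\<Sum>n<N. \<Sum>s\<in>{1..T}. q k s * E n s) = (\<Sum>n<N. \<Sum>s\<in>{1..T}. q k s *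
        (if s = t then (\<Sum>j<N. mu j * P n j * V n j) else mu n * mu n))"
      by (intro sum.cong refl) auto
    also have "\<dots> = (\<Sum>s\<in>{1..T}. q k s * (if s = t then X else Y))"
      unfolding X_def Y_def
      by (subst sum.swap) (auto simp: sum_distrib_left intro!: sum.cong)
    finally show ?thesis .
  qed
  also have "\<dots> = (\<Sum>s\<in>{1..T}. q k s * Y) + q k t * (X - Y)"
  proof -
    have "(\<Sum>s\<in>{1..T}. q k s * (if s = t then X else Y)) = (\<Sum>s\<in>{1..T}. q k s * Y + (if s = t then q k t * (X - Y) else 0))"
      by (rule sum.cong) (auto simp: algebra_simps)
    then show ?thesis using t by (simp add: sum.distrib)
  qed
  also have "\<dots> = q k t * X + (1 - q k t) * Y"
  proof -
    have "(\<Sum>s\<in>{1..T}. q k s * Y) = (\<Sum>s\<in>{1..T}. q k s) * Y" by (rule sum_distrib_right[symmetric])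
    then show ?thesis using q_sum k by (simp add: algebra_simps)
  qed
  also have "X = mu_inner N mu V P" unfolding X_def mu_inner_def by (simp add: mult_ac)
  also have "Y = (vnorm N mu)^2" unfolding Y_def vnorm_def
    by (simp add: power2_eq_square[symmetric] sum_nonneg)
  finally show ?thesis .
qed

end
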